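(* ${\sf ITL}^0_{\circ\forall}$ is complete for the class of expanding posets, and ${\sf ITL}^{\sf FS}_{\circ\forall}$ is complete for the class of persistent posets; that is, every $\mathcal L_{\circ\forall}$-formula valid on all expanding posets belongs to ${\sf ITL}^0_{\circ\forall}$, and every $\mathcal L_{\circ\forall}$-formula valid on all persistent posets belongs to ${\sf ITL}^{\sf FS}_{\circ\forall}$.
   Context: Syntax: fix a countably infinite set $\mathbb P$ of propositional variables. $\mathcal L_{\circ\forall}$ is given by $\varphi ::= \bot \mid p \mid \varphi\wedge\varphi \mid \varphi\vee\varphi \mid \varphi\to\varphi \mid \circ\varphi \mid \forall\varphi$ with $p\in\mathbb P$; $\neg\varphi:=\varphi\to\bot$, $\varphi\leftrightarrow\psi := (\varphi\to\psi)\wedge(\psi\to\varphi)$. Here $\forall$ is a universal modality. Semantics: a dynamical system is $(X,\mathcal T,f)$ with $(X,\mathcal T)$ a topological space and $f\colon X\to X$ continuous. A valuation assigns to each formula an open set with $[\![\bot]\!]=\varnothing$, $[\![\varphi\wedge\psi]\!]=[\![\varphi]\!]\cap[\![\psi]\!]$, $[\![\varphi\vee\psi]\!]=[\![\varphi]\!]\cup[\![\psi]\!]$, $[\![\varphi\to\psi]\!]=\big((X\setminus[\![\varphi]\!])\cup[\![\psi]\!]\big)^\circ$, $[\![\circ\varphi]\!]=f^{-1}[\![\varphi]\!]$, and $[\![\forall\varphi]\!]=X$ if $[\![\varphi]\!]=X$, $=\varnothing$ otherwise. A formula is valid on a class if $[\![\varphi]\!]=X$ for every system of the class and every valuation. An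 expanding poset is a dynamical system whose topology is the up-set topology of a partial order (open sets = upward closed sets); equivalently $f$ is monotone. A persistent poset is an expanding poset whose map $f$ is moreover open. Logics: ${\sf ITL}^0_{\circ\forall}$ is the least set of $\mathcal L_{\circ\forall}$-formulas containing all substitution instances of the axioms of intuitionistic propositional logic, of (N1) $\neg\circ\bot$, (N2) $\circ\varphi\wedge\circ\psi\to\circ(\varphi\wedge\psi)$, (N3) $\circ(\varphi\vee\psi)\to\circ\varphi\vee\circ\psi$, (N4) $\circ(\varphi\to\psi)\to(\circ\varphi\to\circ\psi)$, and of (UA1) $\forall\varphi\vee\neg\forall\varphi$, (UA2) $\forall(\varphi\to\psi)\to(\forall\varphi\to\forall\psi)$, (UA3) $\forall(\varphi\vee\forall\psi)\to\forall\varphi\vee\forall\psi$, (UA4) $\forall\varphi\to\varphi$, (UA5) $\forall\varphi\to\forall\forall\varphi$, (UA6) $\forall\varphi\leftrightarrow\circ\forall\varphi$, closed under modus ponens, the rule from $\varphi$ infer $\circ\varphi$, and the rule from $\varphi$ infer $\forall\varphi$. ${\sf ITL}^{\sf FS}_{\circ\forall}$ is defined likewise but additionally with the axiom (N5) $(\circ\varphi\to\circ\psi)\to\circ(\varphi\to\psi)$. *)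

theory Defs
  imports "HOL-Analysis.Analysis"
begin

datatype form =
    Bot
  | Var nat
  | And form form
  | Or form form
  | Imp form form
  | Next form
  | Univ form

definition Neg :: "form \<Rightarrow> form" where
  "Neg \<phi> = Imp \<phi> Bot"

definition Iff :: "form \<Rightarrow> form \<Rightarrow> form" where
  "Iff \<phi> \<psi> = And (Imp \<phi> \<psi>) (Imp \<psi> \<phi>)"

fun sem :: "'w topology \<Rightarrow> ('w \<Rightarrow> 'w) \<Rightarrow> (nat \<Rightarrow> 'w set) \<Rightarrow> form \<Rightarrow> 'w set" where
  "sem T f V Bot = {}"
| "sem T f V (Var p) = V p"
| "sem T f V (And \<phi> \<psi>) = sem T f V \<phi> \<inter> sem T f V \<psi>"
| "sem T f V (Or \<phi> \<psi>) = sem T f V \<phi> \<union> sem T f V \<psi>"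
| "sem T f V (Imp \<phi> \<psi>) = T interior_of ((topspace T - sem T f V \<phi>) \<union> sem T f V \<psi>)"
| "sem T f V (Next \<phi>) = {x \<in> topspace T. f x \<in> sem T f V \<phi>}"
| "sem T f V (Univ \<phi>) = (if sem T f V \<phi> = topspace T then topspace T else {})"

definition up_topology :: "'w set \<Rightarrow> ('w \<times> 'w) set \<Rightarrow> 'w topology" where
  "up_topology W r = topology (\<lambda>U. U \<subseteq> W \<and> (\<forall>x\<in>U. \<forall>y. (x, y) \<in> r \<longrightarrow> y \<in> U))"

text \<open>Validity on the class of expanding posets: dynamical systems whose topology is the
  up-set topology of a partial order, with f continuous. Carriers are subsets of the type
  form set set.\<close>
definition valid_expanding :: "form \<Rightarrow> bool" where
  "valid_expanding \<phi> \<longleftrightarrow>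
     (\<forall>(W :: form set set) r f V.
        partial_order_on W r \<longrightarrow>
        continuous_map (up_topology W r) (up_topology W r) f \<longrightarrow>
        (\<forall>p. openin (up_topology W r) (V p)) \<longrightarrow>
        sem (up_topology W r) f V \<phi> = topspace (up_topology W r))"

definition valid_persistent :: "form \<Rightarrow> bool" where
  "valid_persistent \<phi> \<longleftrightarrow>
     (\<forall>(W :: form set set) r f V.
        partial_order_on W r \<longrightarrow>
        continuous_map (up_topology W r) (up_topology W r) f \<longrightarrow>
        open_map (up_topology W r) (up_topology W r) f \<longrightarrow>
        (\<forall>p. openin (up_topology W r) (V p)) \<longrightarrow>
        sem (up_topology W r) f V \<phi> = topspace (up_topology W r))"

inductive deriv :: "bool \<Rightarrow> form \<Rightarrow> bool" for fs :: bool where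
  ipc_k: "deriv fs (Imp \<phi> (Imp \<psi> \<phi>))"
| ipc_s: "deriv fs (Imp (Imp \<phi> (Imp \<psi> \<theta>)) (Imp (Imp \<phi> \<psi>) (Imp \<phi> \<theta>)))"
| ipc_and1: "deriv fs (Imp (And \<phi> \<psi>) \<phi>)"
| ipc_and2: "deriv fs (Imp (And \<phi> \<psi>) \<psi>)"
| ipc_andI: "deriv fs (Imp \<phi> (Imp \<psi> (And \<phi> \<psi>)))"
| ipc_or1: "deriv fs (Imp \<phi> (Or \<phi> \<psi>))"
| ipc_or2: "deriv fs (Imp \<psi> (Or \<phi> \<psi>))"
| ipc_orE: "deriv fs (Imp (Imp \<phi> \<theta>) (Imp (Imp \<psi> \<theta>) (Imp (Or \<phi> \<psi>) \<theta>)))"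
| ipc_bot: "deriv fs (Imp Bot \<phi>)"
| N1: "deriv fs (Neg (Next Bot))"
| N2: "deriv fs (Imp (And (Next \<phi>) (Next \<psi>)) (Next (And \<phi> \<psi>)))"
| N3: "deriv fs (Imp (Next (Or \<phi> \<psi>)) (Or (Next \<phi>) (Next \<psi>)))"
| N4: "deriv fs (Imp (Next (Imp \<phi> \<psi>)) (Imp (Next \<phi>) (Next \<psi>)))"
| N5: "fs \<Longrightarrow> deriv fs (Imp (Imp (Next \<phi>) (Next \<psi>)) (Next (Imp \<phi> \<psi>)))"
| UA1: "deriv fs (Or (Univ \<phi>) (Neg (Univ \<phi>)))"
| UA2: "deriv fs (Imp (Univ (Imp \<phi> \<psi>)) (Imp (Univ \<phi>) (Univ \<psi>)))"
| UA3: "deriv fs (Imp (Univ (Or \<phi> (Univ \<psi>))) (Or (Univ \<phi>) (Univ \<psi>)))"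
| UA4: "deriv fs (Imp (Univ \<phi>) \<phi>)"
| UA5: "deriv fs (Imp (Univ \<phi>) (Univ (Univ \<phi>)))"
| UA6: "deriv fs (Iff (Univ \<phi>) (Next (Univ \<phi>)))"
| MP: "deriv fs (Imp \<phi> \<psi>) \<Longrightarrow> deriv fs \<phi> \<Longrightarrow> deriv fs \<psi>"
| NecNext: "deriv fs \<phi> \<Longrightarrow> deriv fs (Next \<phi>)"
| NecUniv: "deriv fs \<phi> \<Longrightarrow> deriv fs (Univ \<phi>)"

definition ITL0 :: "form set" where
  "ITL0 = {\<phi>. deriv False \<phi>}"

definition ITLFS :: "form set" where
  "ITLFS = {\<phi>. deriv True \<phi>}"

end

theory Submission imports Defs begin

inductive thy :: "bool \<Rightarrow> form set \<Rightarrow> form \<Rightarrow> bool" for fs :: bool and G :: "form set" where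
  hyp: "\<phi> \<in> G \<Longrightarrow> thy fs G \<phi>"
| ax: "deriv fs \<phi> \<Longrightarrow> thy fs G \<phi>"
| mp: "thy fs G (Imp a b) \<Longrightarrow> thy fs G a \<Longrightarrow> thy fs G b"

lemma thy_mono: "thy fs G \<phi> \<Longrightarrow> G \<subseteq> H \<Longrightarrow> thy fs H \<phi>"
  by (induction rule: thy.induct) (auto intro: thy.intros)

lemma thy_empty: "thy fs {} \<phi> \<Longrightarrow> deriv fs \<phi>"
  by (induction rule: thy.induct) (auto intro: deriv.intros)

lemma thy_finite: "thy fs G \<phi> \<Longrightarrow> \<exists>F. finite F \<and> F \<subseteq> G \<and> thy fs F \<phi>"
proof (induction rule: thy.induct)
  case (hyp \<phi>) then show ?case by (intro exI[of _ "{\<phi>}"]) (auto intro: thy.intros)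
next
  case (ax \<phi>) then show ?case by (intro exI[of _ "{}"]) (auto intro: thy.intros)
next
  case (mp a b)
  then obtain F1 F2 where "finite F1" "F1 \<subseteq> G" "thy fs F1 (Imp a b)" "finite F2" "F2 \<subseteq> G" "thy fs F2 a" by blast
  then show ?case by (intro exI[of _ "F1 \<union> F2"]) (auto intro: thy.mp thy_mono)
qed

lemma deriv_id: "deriv fs (Imp a a)"
proof -
  have 1: "deriv fs (Imp (Imp a (Imp (Imp a a) a)) (Imp (Imp a (Imp a a)) (Imp a a)))" by (rule ipc_s)
  have 2: "deriv fs (Imp a (Imp (Imp a a) a))" by (rule ipc_k)
  have 3: "deriv fs (Imp a (Imp a a))" by (rule ipc_k)
  show ?thesis using deriv.MP[OF deriv.MP[OF 1 2] 3] .
qed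

lemma deduction: "thy fs (insert a G) b \<Longrightarrow> thy fs G (Imp a b)"
proof (induction rule: thy.induct)
  case (hyp \<phi>)
  then show ?case
  proof
    assume "\<phi> = a" then show ?thesis using deriv_id by (auto intro: thy.ax)
  next
    assume "\<phi> \<in> G" then show ?thesis by (meson ipc_k thy.ax thy.hyp thy.mp)
  qed
next
  case (ax \<phi>)
  then show ?case by (meson ipc_k thy.ax thy.mp)
next
  case (mp c d)
  then show ?case by (meson ipc_s thy.ax thy.mp)
qed

lemma undeduct: "thy fs G (Imp a b) \<Longrightarrow> thy fs (insert a G) b"
  by (meson subset_insertI thy_mono thy.mp thy.hyp insertI1)

lemma thy_cut: "thy fs G a \<Longrightarrow> thy fs (insert a G) b \<Longrightarrow> thy fs G b"
  using deduction thy.mp by blast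

lemma thy_ax2: "deriv fs (Imp a b) \<Longrightarrow> thy fs G a \<Longrightarrow> thy fs G b"
  using thy.ax thy.mp by blast

lemma thy_ax3: "deriv fs (Imp a (Imp b c)) \<Longrightarrow> thy fs G a \<Longrightarrow> thy fs G b \<Longrightarrow> thy fs G c"
  using thy.ax thy.mp by blast

lemma thy_orE: "thy fs G (Or a b) \<Longrightarrow> thy fs (insert a G) c \<Longrightarrow> thy fs (insert b G) c \<Longrightarrow> thy fs G c"
  by (meson deduction ipc_orE thy.ax thy.mp)

definition primeT :: "bool \<Rightarrow> form set \<Rightarrow> bool" where
  "primeT fs D \<longleftrightarrow> (\<forall>\<phi>. thy fs D \<phi> \<longrightarrow> \<phi> \<in> D) \<and> Bot \<notin> D \<and> (\<forall>a b. Or a b \<in> D \<longrightarrow> a \<in> D \<or> b \<in> D)"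

lemma prime_thy: "primeT fs D \<Longrightarrow> thy fs D \<phi> \<Longrightarrow> \<phi> \<in> D"
  unfolding primeT_def by blast

lemma prime_mp: "primeT fs D \<Longrightarrow> Imp a b \<in> D \<Longrightarrow> a \<in> D \<Longrightarrow> b \<in> D"
  by (meson prime_thy thy.hyp thy.mp)

lemma prime_deriv: "primeT fs D \<Longrightarrow> deriv fs \<phi> \<Longrightarrow> \<phi> \<in> D"
  by (meson prime_thy thy.ax)

lemma prime_ax: "primeT fs D \<Longrightarrow> deriv fs (Imp a b) \<Longrightarrow> a \<in> D \<Longrightarrow> b \<in> D"
  by (meson prime_mp prime_deriv)

lemma prime_and: "primeT fs D \<Longrightarrow> And a b \<in> D \<longleftrightarrow> a \<in> D \<and> b \<in> D"
  by (meson ipc_and1 ipc_and2 ipc_andI prime_ax prime_mp)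

lemma prime_or: "primeT fs D \<Longrightarrow> Or a b \<in> D \<longleftrightarrow> a \<in> D \<or> b \<in> D"
  by (meson ipc_or1 ipc_or2 prime_ax primeT_def)

lemma prime_bot: "primeT fs D \<Longrightarrow> Bot \<notin> D"
  unfolding primeT_def by blast

lemma lindenbaum:
  assumes E: "e0 \<in> E" and nd: "\<And>e. e \<in> E \<Longrightarrow> \<not> thy fs G e"
    and cl: "\<And>a b. a \<in> E \<Longrightarrow> b \<in> E \<Longrightarrow> \<exists>c\<in>E. deriv fs (Imp (Or a b) c)"
  shows "\<exists>D. primeT fs D \<and> G \<subseteq> D \<and> D \<inter> E = {}"
proof -
  define A where "A = {D. G \<subseteq> D \<and> (\<forall>e\<in>E. \<not> thy fs D e)}"
  have "\<exists>M\<in>A. \<forall>X\<in>A. M \<subseteq> X \<longrightarrow> X = M"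
  proof (rule subset_Zorn_nonempty)
    show "A \<noteq> {}" using nd unfolding A_def by blast
  next
    fix C assume C: "C \<noteq> {}" "subset.chain A C"
    have "\<not> thy fs (\<Union>C) e" if "e \<in> E" for e
    proof
      assume "thy fs (\<Union>C) e"
      then obtain F where F: "finite F" "F \<subseteq> \<Union>C" "thy fs F e" using thy_finite by blast
      then obtain B where "B \<in> C" "F \<subseteq> B" using finite_subset_Union_chain[OF F(1,2) C(1,2)] by blast
      then have "thy fs B e" using F thy_mono by blast
      moreover have "B \<in> A" using C \<open>B \<in> C\<close> unfolding subset.chain_def by blast
      ultimately show False using that unfolding A_def by blast
    qed
    moreover have "G \<subseteq> \<Union>C" using C unfolding subset.chain_def A_def by blast
    ultimately show "\<Union>C \<in> A" unfolding A_def by blast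
  qed
  then obtain M where M: "M \<in> A" and max: "\<And>X. X \<in> A \<Longrightarrow> M \<subseteq> X \<Longrightarrow> X = M" by blast
  have ins: "\<exists>e\<in>E. thy fs (insert a M) e" if "a \<notin> M" for a
  proof (rule ccontr)
    assume "\<not> ?thesis"
    then have "insert a M \<in> A" using M unfolding A_def by blast
    then show False using max[of "insert a M"] that by blast
  qed
  have closed: "\<phi> \<in> M" if "thy fs M \<phi>" for \<phi>
  proof (rule ccontr)
    assume "\<phi> \<notin> M"
    then obtain e where "e \<in> E" "thy fs (insert \<phi> M) e" using ins by blast
    then have "thy fs M e" using thy_cut that by blast
    then show False using M \<open>e \<in> E\<close> unfolding A_def by blast
  qed
  have bot: "Bot \<notin> M"
  proof
    assume "Bot \<in> M"
    then have "thy fs M e0" by (meson ipc_bot thy.ax thy.hyp thy.mp)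
    then show False using M E unfolding A_def by blast
  qed
  have pr: "a \<in> M \<or> b \<in> M" if "Or a b \<in> M" for a b
  proof (rule ccontr)
    assume "\<not> ?thesis"
    then obtain e1 e2 where e: "e1 \<in> E" "thy fs (insert a M) e1" "e2 \<in> E" "thy fs (insert b M) e2"
      using ins by blast
    then obtain c where c: "c \<in> E" "deriv fs (Imp (Or e1 e2) c)" using cl by blast
    have "thy fs (insert a M) c" using e(2) c(2) by (meson ipc_or1 thy_ax2)
    moreover have "thy fs (insert b M) c" using e(4) c(2) by (meson ipc_or2 thy_ax2)
    ultimately have "thy fs M c" using thy_orE that thy.hyp by blast
    then show False using M c(1) unfolding A_def by blast
  qed
  have "primeT fs M" unfolding primeT_def using closed bot pr by blast
  moreover have "M \<inter> E = {}" using M thy.hyp unfolding A_def by blast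
  ultimately show ?thesis using M unfolding A_def by blast
qed

lemma lindenbaum1:
  assumes "\<not> thy fs G e" shows "\<exists>D. primeT fs D \<and> G \<subseteq> D \<and> e \<notin> D"
  using lindenbaum[of e "{e}" fs G] assms
  by (auto intro: ipc_orE[THEN deriv.MP, THEN deriv.MP] deriv_id)

lemma istop_up: "istopology (\<lambda>U. U \<subseteq> W \<and> (\<forall>x\<in>U. \<forall>y. (x, y) \<in> r \<longrightarrow> y \<in> U))"
  unfolding istopology_def by blast

lemma openin_up: "openin (up_topology W r) U \<longleftrightarrow> U \<subseteq> W \<and> (\<forall>x\<in>U. \<forall>y. (x, y) \<in> r \<longrightarrow> y \<in> U)"
  unfolding up_topology_def by (simp add: topology_inverse'[OF istop_up])


definition CR :: "form set set \<Rightarrow> (form set \<times> form set) set" where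
  "CR W = {(x,y). x \<in> W \<and> y \<in> W \<and> x \<subseteq> y}"

lemma openin_CR: "openin (up_topology W (CR W)) U \<longleftrightarrow> U \<subseteq> W \<and> (\<forall>x\<in>U. \<forall>y\<in>W. x \<subseteq> y \<longrightarrow> y \<in> U)"
  unfolding openin_up CR_def by blast

lemma topspace_CR: "topspace (up_topology W (CR W)) = W"
proof -
  have "openin (up_topology W (CR W)) W" unfolding openin_CR by blast
  then have "W \<subseteq> topspace (up_topology W (CR W))" by (rule openin_subset)
  moreover have "topspace (up_topology W (CR W)) \<subseteq> W"
    using openin_CR openin_topspace by blast
  ultimately show ?thesis by blast
qed

lemma interior_CR: "(up_topology W (CR W)) interior_of S = {x\<in>W. \<forall>y\<in>W. x \<subseteq> y \<longrightarrow> y \<in> S}"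
proof (rule set_eqI, rule iffI)
  fix x assume "x \<in> (up_topology W (CR W)) interior_of S"
  then obtain T where "openin (up_topology W (CR W)) T" "x \<in> T" "T \<subseteq> S" unfolding interior_of_def by blast
  then show "x \<in> {x\<in>W. \<forall>y\<in>W. x \<subseteq> y \<longrightarrow> y \<in> S}" unfolding openin_CR by blast
next
  fix x assume x: "x \<in> {x\<in>W. \<forall>y\<in>W. x \<subseteq> y \<longrightarrow> y \<in> S}"
  have "openin (up_topology W (CR W)) {y\<in>W. x \<subseteq> y}" unfolding openin_CR by blast
  moreover have "{y\<in>W. x \<subseteq> y} \<subseteq> S" using x by blast
  ultimately show "x \<in> (up_topology W (CR W)) interior_of S" using x unfolding interior_of_def by blast
qed

lemma po_CR: "partial_order_on W (CR W)"
  unfolding partial_order_on_def preorder_on_def refl_on_def trans_def antisym_def CR_def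
  by auto

section \<open>Canonical model\<close>

definition Sig :: "form set \<Rightarrow> form set" where
  "Sig G0 = {c. Univ c \<in> G0} \<union> {Neg (Univ c) | c. Univ c \<notin> G0}"

definition CW :: "bool \<Rightarrow> form set \<Rightarrow> form set set" where
  "CW fs G0 = {D. primeT fs D \<and> Sig G0 \<subseteq> D}"

definition nxt :: "form set \<Rightarrow> form set" where
  "nxt D = {\<psi>. Next \<psi> \<in> D}"

lemma univ_part:
  assumes G0: "primeT fs G0" and D: "D \<in> CW fs G0"
  shows "Univ c \<in> D \<longleftrightarrow> Univ c \<in> G0"
proof
  assume u: "Univ c \<in> D"
  show "Univ c \<in> G0"
  proof (rule ccontr)
    assume "Univ c \<notin> G0"
    then have "Neg (Univ c) \<in> D" using D unfolding CW_def Sig_def by blast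
    then have "Bot \<in> D" using u D prime_mp unfolding CW_def Neg_def by blast
    then show False using D prime_bot unfolding CW_def by blast
  qed
next
  assume "Univ c \<in> G0"
  then have "Univ (Univ c) \<in> G0" using G0 UA5 prime_ax by blast
  then show "Univ c \<in> D" using D unfolding CW_def Sig_def by blast
qed

lemma Sig_sub:
  assumes P: "primeT fs P" and same: "\<And>c. Univ c \<in> P \<longleftrightarrow> Univ c \<in> G0"
  shows "Sig G0 \<subseteq> P"
proof
  fix x assume "x \<in> Sig G0"
  then consider c where "x = c" "Univ c \<in> G0" | c where "x = Neg (Univ c)" "Univ c \<notin> G0"
    unfolding Sig_def by blast
  then show "x \<in> P"
  proof cases
    case 1 then show ?thesis using same P UA4 prime_ax by blast
  next
    case 2 then show ?thesis using same P UA1 prime_or prime_deriv by blast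
  qed
qed

lemma G0_in: "primeT fs G0 \<Longrightarrow> G0 \<in> CW fs G0"
  unfolding CW_def using Sig_sub by blast

lemma nxt_prime:
  assumes D: "primeT fs D" shows "primeT fs (nxt D)"
proof -
  have cl: "Next \<phi> \<in> D" if "thy fs (nxt D) \<phi>" for \<phi>
    using that
  proof (induction rule: thy.induct)
    case (hyp \<phi>) then show ?case unfolding nxt_def by blast
  next
    case (ax \<phi>) then show ?case using D NecNext prime_deriv by blast
  next
    case (mp a b) then show ?case using D N4 prime_deriv prime_mp by meson
  qed
  have "Bot \<notin> nxt D"
  proof
    assume "Bot \<in> nxt D"
    then have "Next Bot \<in> D" unfolding nxt_def by blast
    then have "Bot \<in> D" using D N1 prime_deriv prime_mp unfolding Neg_def by meson
    then show False using D prime_bot by blast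
  qed
  moreover have "a \<in> nxt D \<or> b \<in> nxt D" if "Or a b \<in> nxt D" for a b
    using that D N3 prime_ax prime_or unfolding nxt_def by blast
  ultimately show ?thesis using cl unfolding primeT_def nxt_def by blast
qed

lemma nxt_CW:
  assumes G0: "primeT fs G0" and D: "D \<in> CW fs G0" shows "nxt D \<in> CW fs G0"
proof -
  have P: "primeT fs D" using D unfolding CW_def by blast
  have iff: "Univ c \<in> D \<longleftrightarrow> Next (Univ c) \<in> D" for c
    using UA6[of fs c] P prime_deriv prime_and prime_mp unfolding Iff_def by metis
  have "Univ c \<in> nxt D \<longleftrightarrow> Univ c \<in> G0" for c
    using iff univ_part[OF G0 D] unfolding nxt_def by blast
  then show ?thesis using Sig_sub nxt_prime[OF P] unfolding CW_def by blast
qed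

lemma Sig_not_thy:
  assumes G0: "primeT fs G0" and nu: "Univ \<psi> \<notin> G0"
  shows "\<not> thy fs (Sig G0) \<psi>"
proof -
  define P where "P = {c. Univ c \<in> G0}"
  have base: "Univ \<psi> \<in> G0" if "thy fs P \<psi>" for \<psi>
    using that
  proof (induction rule: thy.induct)
    case (hyp \<phi>) then show ?case unfolding P_def by blast
  next
    case (ax \<phi>) then show ?case using G0 NecUniv prime_deriv by blast
  next
    case (mp a b) then show ?case using G0 UA2 prime_deriv prime_mp by meson
  qed
  have step: "\<forall>\<psi>. thy fs (P \<union> (\<lambda>\<theta>. Neg (Univ \<theta>)) ` N) \<psi> \<longrightarrow> Univ \<psi> \<in> G0"
    if "finite N" "N \<subseteq> {\<theta>. Univ \<theta> \<notin> G0}" for N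
    using that
  proof (induction N rule: finite_induct)
    case empty then show ?case using base by simp
  next
    case (insert \<theta> N)
    show ?case
    proof (intro allI impI)
      fix \<psi>
      let ?H = "P \<union> (\<lambda>\<theta>. Neg (Univ \<theta>)) ` N"
      assume "thy fs (P \<union> (\<lambda>\<theta>. Neg (Univ \<theta>)) ` insert \<theta> N) \<psi>"
      then have "thy fs (insert (Neg (Univ \<theta>)) ?H) \<psi>" by (simp add: insert_commute)
      then have "thy fs (insert (Neg (Univ \<theta>)) ?H) (Or \<psi> (Univ \<theta>))" by (meson ipc_or1 thy_ax2)
      moreover have "thy fs (insert (Univ \<theta>) ?H) (Or \<psi> (Univ \<theta>))" by (meson ipc_or2 thy_ax2 thy.hyp insertI1)
      moreover have "thy fs ?H (Or (Univ \<theta>) (Neg (Univ \<theta>)))" by (rule thy.ax, rule UA1)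
      ultimately have "thy fs ?H (Or \<psi> (Univ \<theta>))" using thy_orE by blast
      then have "Univ (Or \<psi> (Univ \<theta>)) \<in> G0" using insert by blast
      then have "Or (Univ \<psi>) (Univ \<theta>) \<in> G0" using G0 UA3 prime_ax by blast
      then show "Univ \<psi> \<in> G0" using insert(4) G0 prime_or by blast
    qed
  qed
  show ?thesis
  proof
    assume "thy fs (Sig G0) \<psi>"
    then obtain F where F: "finite F" "F \<subseteq> Sig G0" "thy fs F \<psi>" using thy_finite by blast
    define N where "N = {\<theta>. Neg (Univ \<theta>) \<in> F \<and> Univ \<theta> \<notin> G0}"
    have "N \<subseteq> (\<lambda>\<theta>. Neg (Univ \<theta>)) -` F" unfolding N_def by blast
    moreover have "finite ((\<lambda>\<theta>. Neg (Univ \<theta>)) -` F)"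
      by (rule finite_vimageI[OF F(1)]) (auto simp: inj_def Neg_def)
    ultimately have fN: "finite N" by (rule finite_subset)
    have "F \<subseteq> P \<union> (\<lambda>\<theta>. Neg (Univ \<theta>)) ` N" using F(2) unfolding Sig_def P_def N_def by blast
    then have "thy fs (P \<union> (\<lambda>\<theta>. Neg (Univ \<theta>)) ` N) \<psi>" using F(3) thy_mono by blast
    then show False using step[OF fN] nu unfolding N_def by blast
  qed
qed

lemma CW_prime: "D \<in> CW fs G0 \<Longrightarrow> primeT fs D"
  unfolding CW_def by blast

lemma CW_up: "D \<in> CW fs G0 \<Longrightarrow> primeT fs D' \<Longrightarrow> D \<subseteq> D' \<Longrightarrow> D' \<in> CW fs G0"
  unfolding CW_def by blast

lemma next_mono: "deriv fs (Imp a b) \<Longrightarrow> deriv fs (Imp (Next a) (Next b))"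
  by (meson N4 NecNext deriv.MP)

lemma truth:
  assumes G0: "primeT fs G0"
  shows "sem (up_topology (CW fs G0) (CR (CW fs G0))) nxt (\<lambda>p. {D\<in>CW fs G0. Var p \<in> D}) \<phi>
         = {D\<in>CW fs G0. \<phi> \<in> D}"
proof (induction \<phi>)
  case Bot
  have "Bot \<notin> D" if "D \<in> CW fs G0" for D using that CW_prime prime_bot by blast
  then show ?case by auto
next
  case (Var p)
  then show ?case by simp
next
  case (And a b)
  have "And a b \<in> D \<longleftrightarrow> a \<in> D \<and> b \<in> D" if "D \<in> CW fs G0" for D
    using that CW_prime prime_and by blast
  with And show ?case by auto
next
  case (Or a b)
  have "Or a b \<in> D \<longleftrightarrow> a \<in> D \<or> b \<in> D" if "D \<in> CW fs G0" for D
    using that CW_prime prime_or by blast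
  with Or show ?case by auto
next
  case (Imp a b)
  let ?W = "CW fs G0"
  have "D \<in> ?W \<Longrightarrow> (\<forall>y\<in>?W. D \<subseteq> y \<longrightarrow> a \<in> y \<longrightarrow> b \<in> y) \<longleftrightarrow> Imp a b \<in> D" for D
  proof
    assume D: "D \<in> ?W" and all: "\<forall>y\<in>?W. D \<subseteq> y \<longrightarrow> a \<in> y \<longrightarrow> b \<in> y"
    show "Imp a b \<in> D"
    proof (rule ccontr)
      assume "Imp a b \<notin> D"
      then have "\<not> thy fs (insert a D) b" using deduction prime_thy CW_prime[OF D] by blast
      then obtain D' where "primeT fs D'" "insert a D \<subseteq> D'" "b \<notin> D'" using lindenbaum1 by blast
      then show False using all CW_up[OF D] by blast
    qed
  next
    assume D: "D \<in> ?W" and "Imp a b \<in> D"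
    then show "\<forall>y\<in>?W. D \<subseteq> y \<longrightarrow> a \<in> y \<longrightarrow> b \<in> y" using CW_prime prime_mp by blast
  qed
  then show ?case using Imp by (auto simp: topspace_CR interior_CR)
next
  case (Next a)
  then show ?case using nxt_CW[OF G0] by (auto simp: topspace_CR nxt_def)
next
  case (Univ a)
  let ?W = "CW fs G0"
  show ?case
  proof (cases "{D\<in>?W. a \<in> D} = ?W")
    case True
    have "Univ a \<in> G0"
    proof (rule ccontr)
      assume "Univ a \<notin> G0"
      then have "\<not> thy fs (Sig G0) a" using Sig_not_thy[OF G0] by blast
      then obtain D' where "primeT fs D'" "Sig G0 \<subseteq> D'" "a \<notin> D'" using lindenbaum1 by blast
      then show False using True unfolding CW_def by blast
    qed
    then have "{D\<in>?W. Univ a \<in> D} = ?W" using univ_part[OF G0] by blast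
    then show ?thesis using True Univ by (simp add: topspace_CR)
  next
    case False
    then obtain D' where D': "D' \<in> ?W" "a \<notin> D'" by blast
    then have "Univ a \<notin> D'" using UA4 prime_ax CW_prime by blast
    then have "Univ a \<notin> G0" using univ_part[OF G0 D'(1)] by blast
    then have "{D\<in>?W. Univ a \<in> D} = {}" using univ_part[OF G0] by blast
    then show ?thesis using False Univ by (simp add: topspace_CR)
  qed
qed

lemma nxt_mono: "x \<subseteq> y \<Longrightarrow> nxt x \<subseteq> nxt y"
  unfolding nxt_def by blast

lemma cont_nxt:
  assumes G0: "primeT fs G0"
  shows "continuous_map (up_topology (CW fs G0) (CR (CW fs G0))) (up_topology (CW fs G0) (CR (CW fs G0))) nxt"
  unfolding continuous_map_def topspace_CR openin_CR
  using nxt_CW[OF G0] nxt_mono by blast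

lemma open_nxt:
  assumes G0: "primeT True G0"
  shows "open_map (up_topology (CW True G0) (CR (CW True G0))) (up_topology (CW True G0) (CR (CW True G0))) nxt"
  unfolding open_map_def
proof (intro allI impI)
  let ?W = "CW True G0"
  fix U assume U: "openin (up_topology ?W (CR ?W)) U"
  then have U': "U \<subseteq> ?W" "\<And>x y. x \<in> U \<Longrightarrow> y \<in> ?W \<Longrightarrow> x \<subseteq> y \<Longrightarrow> y \<in> U" unfolding openin_CR by blast+
  have "y \<in> nxt ` U" if x: "x \<in> U" and y: "y \<in> ?W" and xy: "nxt x \<subseteq> y" for x y
  proof -
    have xW: "x \<in> ?W" using x U' by blast
    have px: "primeT True x" using xW CW_prime by blast
    have py: "primeT True y" using y CW_prime by blast
    have ind: "\<forall>c. thy True (x \<union> Next ` N) (Next c) \<longrightarrow> c \<in> y" if "finite N" "N \<subseteq> y" for N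
      using that
    proof (induction N rule: finite_induct)
      case empty
      then show ?case using prime_thy[OF px] xy unfolding nxt_def by auto
    next
      case (insert t N)
      show ?case
      proof (intro allI impI)
        fix c assume "thy True (x \<union> Next ` insert t N) (Next c)"
        then have "thy True (insert (Next t) (x \<union> Next ` N)) (Next c)" by (simp add: insert_commute)
        then have "thy True (x \<union> Next ` N) (Imp (Next t) (Next c))" by (rule deduction)
        then have "thy True (x \<union> Next ` N) (Next (Imp t c))" by (rule thy_ax2[OF N5[OF TrueI]])
        then have "Imp t c \<in> y" using insert by blast
        then show "c \<in> y" using insert(4) py prime_mp by blast
      qed
    qed
    have nd: "\<not> thy True (x \<union> Next ` y) e" if ein: "e \<in> Next ` (- y)" for e
    proof
      assume "thy True (x \<union> Next ` y) e"
      then obtain F where F: "finite F" "F \<subseteq> x \<union> Next ` y" "thy True F e" using thy_finite by blast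
      define N where "N = {t \<in> y. Next t \<in> F}"
      have fN: "finite N" unfolding N_def
        by (rule finite_subset[OF _ finite_vimageI[OF F(1)]]) (auto simp: inj_def)
      have "F \<subseteq> x \<union> Next ` N" using F(2) unfolding N_def by blast
      then have "thy True (x \<union> Next ` N) e" using F(3) thy_mono by blast
      moreover obtain c where "e = Next c" "c \<notin> y" using ein by blast
      ultimately show False using ind[OF fN] unfolding N_def by blast
    qed
    have cl: "\<exists>c\<in>Next ` (- y). deriv True (Imp (Or a b) c)" if "a \<in> Next ` (- y)" "b \<in> Next ` (- y)" for a b
    proof -
      note ab = that
      obtain c1 c2 where c: "a = Next c1" "b = Next c2" "c1 \<notin> y" "c2 \<notin> y" using ab by blast
      have "Or c1 c2 \<notin> y" using c py prime_or by blast
      moreover have "deriv True (Imp (Or (Next c1) (Next c2)) (Next (Or c1 c2)))"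
      proof -
        have "thy True {Or (Next c1) (Next c2)} (Next (Or c1 c2))"
        proof (rule thy_orE)
          show "thy True {Or (Next c1) (Next c2)} (Or (Next c1) (Next c2))" by (rule thy.hyp) simp
          show "thy True (insert (Next c1) {Or (Next c1) (Next c2)}) (Next (Or c1 c2))"
            by (meson insertI1 ipc_or1 next_mono thy_ax2 thy.hyp)
          show "thy True (insert (Next c2) {Or (Next c1) (Next c2)}) (Next (Or c1 c2))"
            by (meson insertI1 ipc_or2 next_mono thy_ax2 thy.hyp)
        qed
        then show ?thesis using deduction thy_empty by blast
      qed
      ultimately show ?thesis using c by blast
    qed
    have "Bot \<notin> y" using py prime_bot by blast
    then have e0: "Next Bot \<in> Next ` (- y)" by blast
    obtain D where D: "primeT True D" "x \<union> Next ` y \<subseteq> D" "D \<inter> Next ` (- y) = {}"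
      using lindenbaum[OF e0 nd cl] by blast
    have DW: "D \<in> ?W" using CW_up[OF xW D(1)] D(2) by blast
    have "D \<in> U" using U'(2)[OF x DW] D(2) by blast
    moreover have "nxt D = y" using D(2,3) unfolding nxt_def by blast
    ultimately show ?thesis by blast
  qed
  then show "openin (up_topology ?W (CR ?W)) (nxt ` U)"
    unfolding openin_CR using nxt_CW[OF G0] U' by blast
qed

lemma countermodel:
  assumes nd: "\<not> deriv fs \<phi>"
  shows "\<exists>(W :: form set set) r f V. partial_order_on W r \<and>
        continuous_map (up_topology W r) (up_topology W r) f \<and>
        (fs \<longrightarrow> open_map (up_topology W r) (up_topology W r) f) \<and>
        (\<forall>p. openin (up_topology W r) (V p)) \<and>
        sem (up_topology W r) f V \<phi> \<noteq> topspace (up_topology W r)"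
proof -
  have "\<not> thy fs {} \<phi>" using nd thy_empty by blast
  then obtain G0 where G0: "primeT fs G0" "\<phi> \<notin> G0" using lindenbaum1 by blast
  let ?W = "CW fs G0"
  let ?V = "\<lambda>p. {D\<in>?W. Var p \<in> D}"
  have "partial_order_on ?W (CR ?W)" by (rule po_CR)
  moreover have "continuous_map (up_topology ?W (CR ?W)) (up_topology ?W (CR ?W)) nxt"
    by (rule cont_nxt[OF G0(1)])
  moreover have "fs \<longrightarrow> open_map (up_topology ?W (CR ?W)) (up_topology ?W (CR ?W)) nxt"
  proof
    assume "fs"
    then have "fs = True" by simp
    then show "open_map (up_topology ?W (CR ?W)) (up_topology ?W (CR ?W)) nxt"
      using open_nxt G0(1) by simp
  qed
  moreover have "\<forall>p. openin (up_topology ?W (CR ?W)) (?V p)" unfolding openin_CR by blast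
  moreover have "sem (up_topology ?W (CR ?W)) nxt ?V \<phi> \<noteq> topspace (up_topology ?W (CR ?W))"
  proof
    assume "sem (up_topology ?W (CR ?W)) nxt ?V \<phi> = topspace (up_topology ?W (CR ?W))"
    then have "{D\<in>?W. \<phi> \<in> D} = ?W" by (simp only: truth[OF G0(1)] topspace_CR)
    then have "G0 \<in> {D\<in>?W. \<phi> \<in> D}" using G0_in[OF G0(1)] by simp
    then show False using G0(2) by simp
  qed
  ultimately show ?thesis by (intro exI[of _ ?W] exI[of _ "CR ?W"] exI[of _ nxt] exI[of _ ?V]) simp
qed

theorem theorem9p4:
  shows "(\<forall>\<phi>. valid_expanding \<phi> \<longrightarrow> \<phi> \<in> ITL0) \<and>
         (\<forall>\<phi>. valid_persistent \<phi> \<longrightarrow> \<phi> \<in> ITLFS)"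
proof (intro conjI allI impI)
  fix \<phi> assume v: "valid_expanding \<phi>"
  show "\<phi> \<in> ITL0"
  proof (rule ccontr)
    assume "\<phi> \<notin> ITL0"
    then have "\<not> deriv False \<phi>" unfolding ITL0_def by blast
    from countermodel[OF this] obtain W :: "form set set" and r f V where
      m: "partial_order_on W r" "continuous_map (up_topology W r) (up_topology W r) f"
         "\<forall>p. openin (up_topology W r) (V p)" "sem (up_topology W r) f V \<phi> \<noteq> topspace (up_topology W r)"
      by blast
    show False using m v[unfolded valid_expanding_def, rule_format, OF m(1) m(2) m(3)[rule_format]] by simp
  qed
next
  fix \<phi> assume v: "valid_persistent \<phi>"
  show "\<phi> \<in> ITLFS"
  proof (rule ccontr)
    assume "\<phi> \<notin> ITLFS"
    then have "\<not> deriv True \<phi>" unfolding ITLFS_def by blast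
    from countermodel[OF this] obtain W :: "form set set" and r f V where
      m: "partial_order_on W r" "continuous_map (up_topology W r) (up_topology W r) f"
         "open_map (up_topology W r) (up_topology W r) f"
         "\<forall>p. openin (up_topology W r) (V p)" "sem (up_topology W r) f V \<phi> \<noteq> topspace (up_topology W r)"
      by blast
    show False using m v[unfolded valid_persistent_def, rule_format, OF m(1) m(2) m(3) m(4)[rule_format]] by simp
  qed
qed

end
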